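(* Let $a,\delta,\beta,h_1,h_2$ be positive real parameters and consider the planar system of ordinary differential equations, defined for $x>0$, $$\frac{dx}{dt} = x(1-x) - \frac{x}{a+x^2}\,y - h_1 x,\qquad \frac{dy}{dt} = \delta y\left(1-\beta\frac{y}{x}\right) - h_2 y.$$ If $h_1\in\,]0,1[$ and $\delta\in\,]0,h_2[$, then the point $(1-h_1,0)$ is an equilibrium of this system and it is a sink.
   Context: This system is a rescaled prey-predator model with Leslie--Gower and simplified Holling IV functional response and constant-effort harvesting; $x$ denotes the prey and $y$ the predator population. An equilibrium point is called a sink if all eigenvalues of the Jacobian matrix of the vector field evaluated at that point have strictly negative real parts. *)

theory Defs
  imports "HOL-Analysis.Analysis"
begin

definition vf :: "real \<Rightarrow> real \<Rightarrow> real \<Rightarrow> real \<Rightarrow> real \<Rightarrow> real \<times> real \<Rightarrow> real \<times> real" where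
  "vf a \<delta> \<beta> h1 h2 = (\<lambda>(x, y).
     (x * (1 - x) - x / (a + x^2) * y - h1 * x,
      \<delta> * y * (1 - \<beta> * y / x) - h2 * y))"

definition equilibrium :: "(real \<times> real \<Rightarrow> real \<times> real) \<Rightarrow> real \<times> real \<Rightarrow> bool" where
  "equilibrium F p \<longleftrightarrow> F p = (0, 0)"

definition lin_eigenvalue :: "(real \<times> real \<Rightarrow> real \<times> real) \<Rightarrow> complex \<Rightarrow> bool" where
  "lin_eigenvalue J \<mu> \<longleftrightarrow> (\<exists>v1 v2 :: complex. (v1, v2) \<noteq> (0, 0) \<and>
     of_real (fst (J (1, 0))) * v1 + of_real (fst (J (0, 1))) * v2 = \<mu> * v1 \<and>
     of_real (snd (J (1, 0))) * v1 + of_real (snd (J (0, 1))) * v2 = \<mu> * v2)"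

definition sink :: "(real \<times> real \<Rightarrow> real \<times> real) \<Rightarrow> real \<times> real \<Rightarrow> bool" where
  "sink F p \<longleftrightarrow> (\<exists>J. (F has_derivative J) (at p) \<and>
     (\<forall>\<mu>. lin_eigenvalue J \<mu> \<longrightarrow> Re \<mu> < 0))"

end

theory Submission
  imports Defs
begin

theorem theorem1:
  fixes a \<delta> \<beta> h1 h2 :: real
  assumes "a > 0" "\<delta> > 0" "\<beta> > 0" "h1 > 0" "h2 > 0"
    and "h1 < 1" and "\<delta> < h2"
  shows "equilibrium (vf a \<delta> \<beta> h1 h2) (1 - h1, 0) \<and> sink (vf a \<delta> \<beta> h1 h2) (1 - h1, 0)"
proof
  show "equilibrium (vf a \<delta> \<beta> h1 h2) (1 - h1, 0)"
    unfolding equilibrium_def vf_def by (simp add: algebra_simps)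
  define x0 where "x0 = 1 - h1"
  have x0: "x0 > 0" using assms unfolding x0_def by simp
  have ax: "a + x0^2 > 0" using assms by (simp add: add_pos_nonneg)
  define J where "J = (\<lambda>(u::real, v::real). (- x0 * u - x0 / (a + x0^2) * v, (\<delta> - h2) * v))"
  have h1: "h1 = 1 - x0" unfolding x0_def by simp
  have nz1: "fst (x0, 0::real) \<noteq> 0" using x0 by simp
  have nz2: "a + (fst (x0, 0::real))^2 \<noteq> 0" using ax by simp
  have D: "(vf a \<delta> \<beta> h1 h2 has_derivative J) (at (x0, 0))"
    unfolding vf_def case_prod_beta
    apply (rule has_derivative_eq_rhs)
     apply (rule derivative_eq_intros refl nz1 nz2)+
    using x0 ax apply (simp add: J_def fun_eq_iff case_prod_beta field_simps h1 power2_eq_square)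
    done
  have J10: "J (1, 0) = (- x0, 0)" and J01: "J (0, 1) = (- x0 / (a + x0^2), \<delta> - h2)"
    unfolding J_def by simp_all
  have E: "Re \<mu> < 0" if ev: "lin_eigenvalue J \<mu>" for \<mu>
  proof -
    obtain v1 v2 :: complex where nz: "(v1, v2) \<noteq> (0, 0)"
      and e1: "of_real (fst (J (1, 0))) * v1 + of_real (fst (J (0, 1))) * v2 = \<mu> * v1"
      and e2: "of_real (snd (J (1, 0))) * v1 + of_real (snd (J (0, 1))) * v2 = \<mu> * v2"
      using ev unfolding lin_eigenvalue_def by blast
    show ?thesis
    proof (cases "v2 = 0")
      case True
      then have "v1 \<noteq> 0" using nz by auto
      have "of_real (- x0) * v1 = \<mu> * v1" using e1 True J10 by simp
      then have "of_real (- x0) = \<mu>" by (simp only: mult_right_cancel[OF \<open>v1 \<noteq> 0\<close>])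
      then have "\<mu> = - of_real x0" by simp
      then show ?thesis using x0 by simp
    next
      case False
      have "of_real (\<delta> - h2) * v2 = \<mu> * v2" using e2 J10 J01 by simp
      then have "of_real (\<delta> - h2) = \<mu>" by (simp only: mult_right_cancel[OF False])
      then have "\<mu> = of_real (\<delta> - h2)" by simp
      then show ?thesis using assms by simp
    qed
  qed
  show "sink (vf a \<delta> \<beta> h1 h2) (1 - h1, 0)"
    unfolding sink_def x0_def[symmetric] using D E by blast
qed

end
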